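(* Let $n\geqslant1$, $N\in\mathbb{N}$, $\gamma\in\mathbb{R}\setminus\{0\}$, let $a_0,\ldots,a_n$ be holomorphic near $t=0$ with $a_n\equiv1$, and let $M(x,t,u_0,\ldots,u_n)=t^{-\mu}\widetilde M(x,t,u_0,\ldots,u_n)$, where $\mu\geqslant0$ is an integer and $\widetilde M$ is holomorphic near $0\in\mathbb{C}^{n+3}$ ($\mu$ is the pole order of $M$ at $t=0$). Assume that for every integer $k\geqslant1$ the polynomial $P_k(\lambda)=\sum_{j=0}^n a_j(0)(k+N+{\rm i}\gamma\lambda)^j$ has no integer roots. Let $\psi=\sum_{k=1}^\infty c_k(x^{{\rm i}\gamma})x^k$, with $c_k$ meromorphic at $t=0$, be a formal solution of $$\sum_{j=0}^n a_j(x^{{\rm i}\gamma})(\delta+N)^j u=x\,M(x,x^{{\rm i}\gamma},u,\delta u,\ldots,\delta^n u),\qquad\delta=x\frac{d}{dx}.$$ Then for every $k\geqslant1$, the pole order $\nu_k$ of $c_k(t)$ at $t=0$ satisfies $\nu_k\leqslant k\mu$.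
   Context: $x^{{\rm i}\gamma}=e^{{\rm i}\gamma\ln x}$. On exotic series $\delta$ acts termwise by $\delta\bigl(p(x^{{\rm i}\gamma})x^k\bigr)=\bigl((k+{\rm i}\gamma\,t\tfrac{d}{dt})p\bigr)(x^{{\rm i}\gamma})x^k$; substitution into $M$ is formal. The pole order of $c_k$ is the integer $\nu_k$ with $c_k(t)=t^{-\nu_k}\cdot(\text{holomorphic function nonvanishing at }0)$ (negative if $c_k$ vanishes at $0$). *)

theory Defs
  imports "HOL-Complex_Analysis.Complex_Analysis" "HOL-Library.FuncSet"
begin

text \<open>The operator s + i*gamma*t*d/dt acting on a function of t.  Applied to the
  coefficient of x^k with s = k (+N), it realises delta (resp. delta + N) termwise.\<close>
definition dop :: "real \<Rightarrow> complex \<Rightarrow> (complex \<Rightarrow> complex) \<Rightarrow> (complex \<Rightarrow> complex)" where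
  "dop \<gamma> s f = (\<lambda>t. s * f t + \<i> * complex_of_real \<gamma> * t * deriv f t)"

text \<open>For fixed t, the formal power series in x of delta^j psi, where
  psi = sum_{k>=1} c_k(t) x^k.\<close>
definition delta_ser :: "real \<Rightarrow> nat \<Rightarrow> (nat \<Rightarrow> complex \<Rightarrow> complex) \<Rightarrow> complex \<Rightarrow> complex fps" where
  "delta_ser \<gamma> j c t = Abs_fps (\<lambda>k. if k = 0 then 0 else ((dop \<gamma> (of_nat k)) ^^ j) (c k) t)"

definition multi_idx :: "nat \<Rightarrow> (nat \<Rightarrow> nat) set" where
  "multi_idx n = PiE {..n} (\<lambda>_. UNIV)"

text \<open>Mt(x,t,u) = sum_{p,q,beta} m p q beta x^p t^q u^beta, holomorphic near 0 in C^(n+3):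
  the Taylor series converges absolutely on some polydisc of radius rho > 0.\<close>
definition holo_coeffs :: "nat \<Rightarrow> (nat \<Rightarrow> nat \<Rightarrow> (nat \<Rightarrow> nat) \<Rightarrow> complex) \<Rightarrow> bool" where
  "holo_coeffs n m \<longleftrightarrow> (\<exists>\<rho>>0. (\<lambda>(p, q, \<beta>). norm (m p q \<beta>) * \<rho> ^ (p + q + sum \<beta> {..n}))
       summable_on (UNIV \<times> UNIV \<times> multi_idx n))"

text \<open>Coefficient of x^K (a function of t) of the formal substitution
  Mt(x, t, u_0, ..., u_n) with u_j = delta^j psi.  Since each u_j has no x^0 term,
  only multi-indices with all entries at most K can contribute.\<close>
definition subst_coeff ::
  "nat \<Rightarrow> real \<Rightarrow> (nat \<Rightarrow> nat \<Rightarrow> (nat \<Rightarrow> nat) \<Rightarrow> complex) \<Rightarrow> (nat \<Rightarrow> complex \<Rightarrow> complex) \<Rightarrow> nat \<Rightarrow> complex \<Rightarrow> complex" where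
  "subst_coeff n \<gamma> m c K t =
     (\<Sum>p\<in>{..K}. \<Sum>\<beta>\<in>PiE {..n} (\<lambda>_. {..K}).
        (\<Sum>q. m p q \<beta> * t ^ q) * fps_nth (\<Prod>j\<in>{..n}. (delta_ser \<gamma> j c t) ^ \<beta> j) (K - p))"

end

theory Submission
  imports Defs
begin

definition Cl :: "nat \<Rightarrow> (complex \<Rightarrow> complex) \<Rightarrow> complex \<Rightarrow> bool" where
  "Cl e f v \<longleftrightarrow> (\<exists>\<rho>>0. \<exists>g. g holomorphic_on ball 0 \<rho> \<and> g 0 = v \<and>
      (\<forall>t\<in>ball 0 \<rho> - {0}. f t = g t / t ^ e))"

lemma Cl_holo: "g holomorphic_on ball 0 \<rho> \<Longrightarrow> \<rho> > 0 \<Longrightarrow> Cl 0 g (g 0)"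
  unfolding Cl_def by auto

lemma Cl_const: "Cl 0 (\<lambda>_. c) c"
  by (rule Cl_holo[of _ 1, simplified]) auto

lemma Cl_zero: "Cl e (\<lambda>_. 0) 0"
  unfolding Cl_def by (rule exI[of _ 1], auto intro!: exI[of _ "\<lambda>_. 0"])

lemma Cl_mult:
  assumes "Cl a f v" "Cl b f' w"
  shows "Cl (a + b) (\<lambda>t. f t * f' t) (v * w)"
proof -
  obtain \<rho>1 g1 where 1: "\<rho>1 > 0" "g1 holomorphic_on ball 0 \<rho>1" "g1 0 = v"
    "\<forall>t\<in>ball 0 \<rho>1 - {0}. f t = g1 t / t ^ a" using assms(1) unfolding Cl_def by blast
  obtain \<rho>2 g2 where 2: "\<rho>2 > 0" "g2 holomorphic_on ball 0 \<rho>2" "g2 0 = w"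
    "\<forall>t\<in>ball 0 \<rho>2 - {0}. f' t = g2 t / t ^ b" using assms(2) unfolding Cl_def by blast
  show ?thesis unfolding Cl_def
  proof (intro exI[of _ "min \<rho>1 \<rho>2"] conjI exI[of _ "\<lambda>t. g1 t * g2 t"] ballI)
    show "(\<lambda>t. g1 t * g2 t) holomorphic_on ball 0 (min \<rho>1 \<rho>2)"
      by (intro holomorphic_on_mult; rule holomorphic_on_subset[OF 1(2)] holomorphic_on_subset[OF 2(2)]) auto
    fix t :: complex assume t: "t \<in> ball 0 (min \<rho>1 \<rho>2) - {0}"
    then show "f t * f' t = g1 t * g2 t / t ^ (a + b)" using 1(4) 2(4)
      by (auto simp: power_add)
  qed (use 1 2 in auto)
qed

lemma Cl_add:
  assumes "Cl e f v" "Cl e f' w"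
  shows "Cl e (\<lambda>t. f t + f' t) (v + w)"
proof -
  obtain \<rho>1 g1 where 1: "\<rho>1 > 0" "g1 holomorphic_on ball 0 \<rho>1" "g1 0 = v"
    "\<forall>t\<in>ball 0 \<rho>1 - {0}. f t = g1 t / t ^ e" using assms(1) unfolding Cl_def by blast
  obtain \<rho>2 g2 where 2: "\<rho>2 > 0" "g2 holomorphic_on ball 0 \<rho>2" "g2 0 = w"
    "\<forall>t\<in>ball 0 \<rho>2 - {0}. f' t = g2 t / t ^ e" using assms(2) unfolding Cl_def by blast
  show ?thesis unfolding Cl_def
  proof (intro exI[of _ "min \<rho>1 \<rho>2"] conjI exI[of _ "\<lambda>t. g1 t + g2 t"] ballI)
    show "(\<lambda>t. g1 t + g2 t) holomorphic_on ball 0 (min \<rho>1 \<rho>2)"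
      by (intro holomorphic_on_add; rule holomorphic_on_subset[OF 1(2)] holomorphic_on_subset[OF 2(2)]) auto
    fix t :: complex assume t: "t \<in> ball 0 (min \<rho>1 \<rho>2) - {0}"
    then show "f t + f' t = (g1 t + g2 t) / t ^ e" using 1(4) 2(4)
      by (auto simp: add_divide_distrib)
  qed (use 1 2 in auto)
qed

lemma Cl_sum:
  assumes "finite I" "\<forall>i\<in>I. Cl e (f i) (v i)"
  shows "Cl e (\<lambda>t. \<Sum>i\<in>I. f i t) (\<Sum>i\<in>I. v i)"
  using assms by (induction I rule: finite_induct) (auto intro: Cl_add Cl_zero)

definition Cl' where "Cl' e f \<longleftrightarrow> (\<exists>v. Cl e f v)"

lemma Cl'_sum:
  assumes "finite I" "\<forall>i\<in>I. Cl' e (f i)"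
  shows "Cl' e (\<lambda>t. \<Sum>i\<in>I. f i t)"
proof -
  from assms(2) obtain v where "\<forall>i\<in>I. Cl e (f i) (v i)" unfolding Cl'_def by metis
  then show ?thesis using Cl_sum[OF assms(1)] unfolding Cl'_def by blast
qed

lemma Cl_mono:
  assumes "Cl e f v" "e \<le> e'"
  shows "Cl' e' f"
proof -
  obtain \<rho>1 g1 where 1: "\<rho>1 > 0" "g1 holomorphic_on ball 0 \<rho>1" "g1 0 = v"
    "\<forall>t\<in>ball 0 \<rho>1 - {0}. f t = g1 t / t ^ e" using assms(1) unfolding Cl_def by blast
  show ?thesis unfolding Cl'_def Cl_def
  proof (intro exI[of _ \<rho>1] exI conjI exI[of _ "\<lambda>t. g1 t * t ^ (e' - e)"] ballI)
    fix t :: complex assume t: "t \<in> ball 0 \<rho>1 - {0}"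
    have "t ^ e' = t ^ e * t ^ (e' - e)" using assms(2) by (simp add: power_add[symmetric])
    then show "f t = g1 t * t ^ (e' - e) / t ^ e'" using 1(4) t by auto
  qed (use 1 in \<open>auto intro!: holomorphic_intros\<close>)
qed

lemma Cl_dop:
  assumes "Cl e f v"
  shows "Cl e (dop \<gamma> s f) ((s - \<i> * of_real \<gamma> * of_nat e) * v)"
proof -
  obtain \<rho> g where 1: "\<rho> > 0" "g holomorphic_on ball 0 \<rho>" "g 0 = v"
    "\<forall>t\<in>ball 0 \<rho> - {0}. f t = g t / t ^ e" using assms(1) unfolding Cl_def by blast
  show ?thesis unfolding Cl_def
  proof (intro exI[of _ \<rho>] conjI exI[of _ "\<lambda>t. (s - \<i> * of_real \<gamma> * of_nat e) * g t + \<i> * of_real \<gamma> * t * deriv g t"] ballI)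
    show "(\<lambda>t. (s - \<i> * of_real \<gamma> * of_nat e) * g t + \<i> * of_real \<gamma> * t * deriv g t) holomorphic_on ball 0 \<rho>"
      using 1(2) by (intro holomorphic_intros) auto
    fix t :: complex assume t: "t \<in> ball 0 \<rho> - {0}"
    have ev: "eventually (\<lambda>x. f x = g x / x ^ e) (nhds t)"
    proof -
      have "eventually (\<lambda>x. x \<in> ball 0 \<rho> - {0}) (nhds t)"
        using t by (intro eventually_nhds_in_open) auto
      then show ?thesis by eventually_elim (use 1(4) in auto)
    qed
    have gd: "(g has_field_derivative deriv g t) (at t)"
      using 1(2) t by (intro holomorphic_derivI) auto
    have "((\<lambda>x. g x / x ^ e) has_field_derivative
        (deriv g t * t ^ e - g t * (of_nat e * t ^ (e - 1))) / (t ^ e * t ^ e)) (at t)"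
      using t by (auto intro!: derivative_eq_intros gd)
    then have "deriv f t = (deriv g t * t ^ e - g t * (of_nat e * t ^ (e - 1))) / (t ^ e * t ^ e)"
      using deriv_cong_ev[OF ev refl] DERIV_imp_deriv by metis
    moreover have te: "t * (of_nat e * t ^ (e - 1)) = of_nat e * t ^ e"
      by (cases e) auto
    ultimately have "t * deriv f t = t * ((deriv g t * t ^ e - g t * (of_nat e * t ^ (e - 1))) / (t ^ e * t ^ e))"
      by simp
    also have "\<dots> = (t * deriv g t * t ^ e - g t * (t * (of_nat e * t ^ (e - 1)))) / (t ^ e * t ^ e)"
      by (simp add: algebra_simps)
    also have "\<dots> = (t * deriv g t - of_nat e * g t) / t ^ e"
      using t unfolding te by (simp add: field_simps)
    finally have td: "t * deriv f t = (t * deriv g t - of_nat e * g t) / t ^ e" .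
    have "dop \<gamma> s f t = s * (g t / t ^ e) + \<i> * of_real \<gamma> * (t * deriv f t)"
      using t 1(4) unfolding dop_def by (simp add: mult.assoc)
    also have "\<dots> = ((s - \<i> * of_real \<gamma> * of_nat e) * g t + \<i> * of_real \<gamma> * t * deriv g t) / t ^ e"
      using t unfolding td by (simp add: field_simps)
    finally show "dop \<gamma> s f t = ((s - \<i> * of_real \<gamma> * of_nat e) * g t + \<i> * of_real \<gamma> * t * deriv g t) / t ^ e" .
  qed (use 1 in auto)
qed

lemma Cl_funpow:
  assumes "Cl e f v"
  shows "Cl e ((dop \<gamma> s ^^ j) f) ((s - \<i> * of_real \<gamma> * of_nat e) ^ j * v)"
proof (induction j)
  case 0
  then show ?case using assms by simp
next
  case (Suc j)
  have "Cl e (dop \<gamma> s ((dop \<gamma> s ^^ j) f)) ((s - \<i> * of_real \<gamma> * of_nat e) * ((s - \<i> * of_real \<gamma> * of_nat e) ^ j * v))"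
    by (rule Cl_dop[OF Suc])
  then show ?case by (simp add: mult.assoc)
qed

lemma Cl'_mult: "Cl' a f \<Longrightarrow> Cl' b f' \<Longrightarrow> Cl' (a + b) (\<lambda>t. f t * f' t)"
  unfolding Cl'_def using Cl_mult by blast

definition grd :: "nat \<Rightarrow> nat \<Rightarrow> (complex \<Rightarrow> complex fps) \<Rightarrow> bool" where
  "grd \<mu> K F \<longleftrightarrow> (\<forall>i\<le>K. Cl' (i * \<mu>) (\<lambda>t. F t $ i))"

lemma grd_one: "grd \<mu> K (\<lambda>t. 1)"
  unfolding grd_def Cl'_def
proof (intro allI impI)
  fix i assume "i \<le> K"
  show "\<exists>v. Cl (i * \<mu>) (\<lambda>t. (1::complex fps) $ i) v"
  proof (cases "i = 0")
    case True then show ?thesis using Cl_const[of 1] by auto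
  next
    case False then show ?thesis using Cl_zero by auto
  qed
qed

lemma grd_mult:
  assumes "grd \<mu> K F" "grd \<mu> K G"
  shows "grd \<mu> K (\<lambda>t. F t * G t)"
  unfolding grd_def
proof (intro allI impI)
  fix i assume i: "i \<le> K"
  have "\<forall>l\<in>{0..i}. Cl' (i * \<mu>) (\<lambda>t. F t $ l * G t $ (i - l))"
  proof
    fix l assume l: "l \<in> {0..i}"
    have "Cl' (l * \<mu> + (i - l) * \<mu>) (\<lambda>t. F t $ l * G t $ (i - l))"
      using assms i l unfolding grd_def by (intro Cl'_mult) auto
    moreover have "l * \<mu> + (i - l) * \<mu> = i * \<mu>"
      using l by (simp add: add_mult_distrib[symmetric])
    ultimately show "Cl' (i * \<mu>) (\<lambda>t. F t $ l * G t $ (i - l))" by simp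
  qed
  then have "Cl' (i * \<mu>) (\<lambda>t. \<Sum>l=0..i. F t $ l * G t $ (i - l))"
    by (intro Cl'_sum) auto
  then show "Cl' (i * \<mu>) (\<lambda>t. (F t * G t) $ i)"
    by (simp add: fps_mult_nth)
qed

lemma grd_power: "grd \<mu> K F \<Longrightarrow> grd \<mu> K (\<lambda>t. F t ^ b)"
  by (induction b) (auto intro: grd_mult grd_one)

lemma grd_prod:
  assumes "finite A" "\<forall>j\<in>A. grd \<mu> K (F j)"
  shows "grd \<mu> K (\<lambda>t. \<Prod>j\<in>A. F j t)"
  using assms by (induction A rule: finite_induct) (auto intro: grd_mult grd_one)

lemma Cl_limit:
  assumes "Cl a f v" "Cl b f' w" "eventually (\<lambda>t. f t = f' t) (at 0)" "b < a"
  shows "v = 0"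
proof -
  obtain \<rho>1 g1 where 1: "\<rho>1 > 0" "g1 holomorphic_on ball 0 \<rho>1" "g1 0 = v"
    "\<forall>t\<in>ball 0 \<rho>1 - {0}. f t = g1 t / t ^ a" using assms(1) unfolding Cl_def by blast
  obtain \<rho>2 g2 where 2: "\<rho>2 > 0" "g2 holomorphic_on ball 0 \<rho>2" "g2 0 = w"
    "\<forall>t\<in>ball 0 \<rho>2 - {0}. f' t = g2 t / t ^ b" using assms(2) unfolding Cl_def by blast
  have c1: "isCont g1 0"
    using 1 by (intro continuous_on_interior[OF holomorphic_on_imp_continuous_on[OF 1(2)]]) auto
  have c2: "isCont g2 0"
    using 2 by (intro continuous_on_interior[OF holomorphic_on_imp_continuous_on[OF 2(2)]]) auto
  have l1: "(g1 \<longlongrightarrow> v) (at 0)" using c1 1(3) by (simp add: isCont_def)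
  have "((\<lambda>t. g2 t * t ^ (a - b)) \<longlongrightarrow> w * 0 ^ (a - b)) (at 0)"
    using c2 2(3) unfolding isCont_def by (intro tendsto_intros) auto
  then have l2: "((\<lambda>t. g2 t * t ^ (a - b)) \<longlongrightarrow> 0) (at 0)" using assms(4) by (simp add: power_0_left)
  have ev1: "eventually (\<lambda>t. t \<in> ball 0 (min \<rho>1 \<rho>2) - {0}) (at 0)"
    using 1(1) 2(1) by (auto simp: eventually_at dist_commute intro!: exI[of _ "min \<rho>1 \<rho>2"])
  have "eventually (\<lambda>t. g2 t * t ^ (a - b) = g1 t) (at 0)"
    using ev1 assms(3)
  proof eventually_elim
    case (elim t)
    then have t: "t \<noteq> 0" by auto
    have "g1 t / t ^ a = g2 t / t ^ b" using elim 1(4) 2(4) by auto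
    moreover have "t ^ a = t ^ b * t ^ (a - b)" using assms(4) by (simp add: power_add[symmetric])
    ultimately show ?case using t by (auto simp: field_simps)
  qed
  then have "(g1 \<longlongrightarrow> 0) (at 0)" by (rule Lim_transform_eventually[OF l2])
  then show ?thesis using l1 tendsto_unique[OF at_neq_bot] by blast
qed

lemma mero_Cl:
  assumes "f meromorphic_on {0}"
    and "\<forall>\<nu>::int. \<forall>h::complex \<Rightarrow> complex. ((\<exists>\<rho>>0. h holomorphic_on ball 0 \<rho>) \<and> h 0 \<noteq> 0 \<and>
            (\<forall>\<^sub>F t in at 0. f t = t powi (- \<nu>) * h t)) \<longrightarrow> \<nu> \<le> int E"
  shows "Cl' E f"
proof (cases "eventually (\<lambda>t. f t = 0) (at 0)")
  case True
  then obtain d where d: "d > 0" "\<forall>x. x \<noteq> 0 \<and> dist x 0 < d \<longrightarrow> f x = 0"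
    by (auto simp: eventually_at)
  show ?thesis unfolding Cl'_def Cl_def
    by (rule exI[of _ 0], rule exI[of _ d], use d in \<open>auto intro!: exI[of _ "\<lambda>_. 0"]\<close>)
next
  case False
  have iso: "isolated_singularity_at f 0" "not_essential f 0"
    using assms(1) by (auto simp: meromorphic_at_iff)
  have fr: "\<exists>\<^sub>F w in at 0. f w \<noteq> 0" using False by (simp add: not_eventually)
  obtain r where r: "zor_poly f 0 0 \<noteq> 0" "r > 0" "zor_poly f 0 holomorphic_on cball 0 r"
    "\<forall>w\<in>cball 0 r - {0}. f w = zor_poly f 0 w * (w - 0) powi zorder f 0"
    using zorder_exist[OF iso fr] by blast
  define g where "g = zor_poly f 0"
  define n where "n = zorder f 0"
  have ev: "\<forall>\<^sub>F t in at 0. f t = t powi (- (- n)) * g t"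
    using r(2,4) unfolding g_def n_def
    by (auto simp: eventually_at dist_commute intro!: exI[of _ r])
  have "(\<exists>\<rho>>0. g holomorphic_on ball 0 \<rho>)"
    using r(2,3) unfolding g_def by (intro exI[of _ r]) (auto intro: holomorphic_on_subset[OF _ ball_subset_cball])
  then have le: "- n \<le> int E" using assms(2) ev r(1) unfolding g_def by blast
  show ?thesis unfolding Cl'_def Cl_def
  proof (intro exI[of _ r] exI conjI exI[of _ "\<lambda>t. g t * t ^ nat (n + int E)"] ballI)
    show "(\<lambda>t. g t * t ^ nat (n + int E)) holomorphic_on ball 0 r"
      using r(3) unfolding g_def by (intro holomorphic_intros holomorphic_on_subset[OF _ ball_subset_cball])
    fix t :: complex assume t: "t \<in> ball 0 r - {0}"
    have "t powi n = t powi (int (nat (n + int E)) + (- int E))" using le by simp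
    also have "\<dots> = t powi (int (nat (n + int E))) * t powi (- int E)"
      by (rule power_int_add) (use t in auto)
    also have "\<dots> = t ^ nat (n + int E) / t ^ E"
      by (simp only: power_int_minus power_int_of_nat divide_inverse)
    finally show "f t = g t * t ^ nat (n + int E) / t ^ E"
      using r(4) t unfolding g_def n_def by auto
  qed (use r in auto)
qed

lemma mseries_holo:
  assumes "holo_coeffs n m" "\<beta> \<in> multi_idx n"
  shows "\<exists>\<rho>>0. (\<lambda>t. \<Sum>q. m p q \<beta> * t ^ q) holomorphic_on ball 0 \<rho>"
proof -
  obtain \<rho> where \<rho>: "\<rho> > 0" and sm: "(\<lambda>(p, q, \<beta>). norm (m p q \<beta>) * \<rho> ^ (p + q + sum \<beta> {..n}))
       summable_on (UNIV \<times> UNIV \<times> multi_idx n)"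
    using assms(1) unfolding holo_coeffs_def by blast
  define S where "S = sum \<beta> {..n}"
  have "(\<lambda>(p, q, \<beta>). norm (m p q \<beta>) * \<rho> ^ (p + q + sum \<beta> {..n})) summable_on (\<lambda>q. (p, q, \<beta>)) ` UNIV"
    by (rule summable_on_subset_banach[OF sm]) (use assms(2) in auto)
  then have "((\<lambda>(p, q, \<beta>). norm (m p q \<beta>) * \<rho> ^ (p + q + sum \<beta> {..n})) \<circ> (\<lambda>q. (p, q, \<beta>))) summable_on UNIV"
    by (subst (asm) summable_on_reindex) (auto simp: inj_on_def)
  then have "(\<lambda>q. norm (m p q \<beta>) * \<rho> ^ (p + q + S)) summable_on UNIV"
    by (simp add: o_def S_def)
  then have "summable (\<lambda>q. norm (m p q \<beta>) * \<rho> ^ (p + q + S))"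
    using \<rho> by (subst (asm) summable_on_UNIV_nonneg_real_iff) auto
  moreover have "(\<lambda>q. norm (m p q \<beta>) * \<rho> ^ (p + q + S)) = (\<lambda>q. \<rho> ^ (p + S) * (norm (m p q \<beta>) * \<rho> ^ q))"
    by (auto simp: power_add)
  ultimately have "summable (\<lambda>q. norm (m p q \<beta>) * \<rho> ^ q)"
    using \<rho> by (simp add: summable_cmult_iff)
  then have "summable (\<lambda>q. norm (m p q \<beta> * (complex_of_real \<rho>) ^ q))"
    using \<rho> by (simp add: norm_mult norm_power)
  then have "summable (\<lambda>q. m p q \<beta> * (complex_of_real \<rho>) ^ q)"
    by (rule summable_norm_cancel)
  then have cr: "conv_radius (\<lambda>q. m p q \<beta>) \<ge> \<rho>"
    using conv_radius_geI[of "\<lambda>q. m p q \<beta>" "complex_of_real \<rho>"] \<rho> by simp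
  have fn: "fps_nth (Abs_fps (\<lambda>q. m p q \<beta>)) = (\<lambda>q. m p q \<beta>)" by (rule ext) simp
  have "eval_fps (Abs_fps (\<lambda>q. m p q \<beta>)) holomorphic_on ball 0 \<rho>"
  proof (rule holomorphic_on_eval_fps)
    show "ball 0 \<rho> \<subseteq> eball 0 (fps_conv_radius (Abs_fps (\<lambda>q. m p q \<beta>)))"
      unfolding fps_conv_radius_def fn
    proof
      fix x assume "x \<in> ball 0 \<rho>"
      then have "ereal (dist 0 x) < ereal \<rho>" by simp
      then have "ereal (dist 0 x) < conv_radius (\<lambda>q. m p q \<beta>)" using cr by (rule less_le_trans)
      then show "x \<in> eball 0 (conv_radius (\<lambda>q. m p q \<beta>))"
        by (simp add: eball_def)
    qed
  qed
  then show ?thesis using \<rho> unfolding eval_fps_def fn by blast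
qed


theorem lemma3:
  fixes n N \<mu> :: nat and \<gamma> :: real and r :: real
    and a :: "nat \<Rightarrow> complex \<Rightarrow> complex"
    and m :: "nat \<Rightarrow> nat \<Rightarrow> (nat \<Rightarrow> nat) \<Rightarrow> complex"
    and c :: "nat \<Rightarrow> complex \<Rightarrow> complex"
  assumes n_ge: "n \<ge> 1"
    and gamma_nz: "\<gamma> \<noteq> 0"
    and r_pos: "r > 0"
    and a_holo: "\<forall>j\<le>n. a j holomorphic_on ball 0 r"
    and a_n: "\<forall>t\<in>ball 0 r. a n t = 1"
    and M_holo: "holo_coeffs n m"
    and no_int_roots: "\<forall>k::nat\<ge>1. \<forall>l::int.
        (\<Sum>j\<le>n. a j 0 * (of_nat (k + N) + \<i> * of_real \<gamma> * of_int l) ^ j) \<noteq> 0"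
    and c_mero: "\<forall>k\<ge>1. c k meromorphic_on {0}"
    and solution: "\<forall>k\<ge>1. \<forall>\<^sub>F t in at 0.
        (\<Sum>j\<le>n. a j t * ((dop \<gamma> (of_nat (k + N))) ^^ j) (c k) t)
          = inverse (t ^ \<mu>) * subst_coeff n \<gamma> m c (k - 1) t"
  shows "\<forall>k\<ge>1. \<forall>\<nu>::int. \<forall>h::complex \<Rightarrow> complex.
           ((\<exists>\<rho>>0. h holomorphic_on ball 0 \<rho>) \<and> h 0 \<noteq> 0 \<and>
            (\<forall>\<^sub>F t in at 0. c k t = t powi (- \<nu>) * h t))
           \<longrightarrow> \<nu> \<le> int k * int \<mu>"
proof -
  define P where "P k \<longleftrightarrow> (\<forall>\<nu>::int. \<forall>h::complex \<Rightarrow> complex.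
           ((\<exists>\<rho>>0. h holomorphic_on ball 0 \<rho>) \<and> h 0 \<noteq> 0 \<and>
            (\<forall>\<^sub>F t in at 0. c k t = t powi (- \<nu>) * h t))
           \<longrightarrow> \<nu> \<le> int k * int \<mu>)" for k
  have "k \<ge> 1 \<longrightarrow> P k" for k
  proof (induction k rule: less_induct)
    case (less k)
    show ?case
    proof
      assume k1: "k \<ge> 1"
      have cj: "Cl' (j * \<mu>) (c j)" if "1 \<le> j" "j < k" for j
      proof (rule mero_Cl)
        show "c j meromorphic_on {0}" using c_mero that by auto
        show "\<forall>\<nu>::int. \<forall>h::complex \<Rightarrow> complex. ((\<exists>\<rho>>0. h holomorphic_on ball 0 \<rho>) \<and> h 0 \<noteq> 0 \<and>
            (\<forall>\<^sub>F t in at 0. c j t = t powi (- \<nu>) * h t)) \<longrightarrow> \<nu> \<le> int (j * \<mu>)"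
          using less.IH[of j] that unfolding P_def by auto
      qed
      have dser: "grd \<mu> (k - 1) (\<lambda>t. delta_ser \<gamma> j c t)" for j
        unfolding grd_def
      proof (intro allI impI)
        fix i assume i: "i \<le> k - 1"
        show "Cl' (i * \<mu>) (\<lambda>t. delta_ser \<gamma> j c t $ i)"
        proof (cases "i = 0")
          case True then show ?thesis unfolding delta_ser_def Cl'_def using Cl_zero by auto
        next
          case False
          then have "Cl' (i * \<mu>) (c i)" using cj[of i] i k1 by auto
          then obtain v where "Cl (i * \<mu>) (c i) v" unfolding Cl'_def by blast
          note Cl_funpow[OF this, where \<gamma>=\<gamma> and s="of_nat i" and j=j]
          then show ?thesis unfolding delta_ser_def Cl'_def using False by auto
        qed
      qed
      have prodg: "grd \<mu> (k - 1) (\<lambda>t. \<Prod>j\<in>{..n}. delta_ser \<gamma> j c t ^ \<beta> j)" for \<beta>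
      proof (rule grd_prod)
        show "\<forall>j\<in>{..n}. grd \<mu> (k - 1) (\<lambda>t. delta_ser \<gamma> j c t ^ \<beta> j)"
          using grd_power[OF dser] by blast
      qed simp
      have sub: "Cl' ((k - 1) * \<mu>) (subst_coeff n \<gamma> m c (k - 1))"
      proof -
        have "Cl' ((k - 1) * \<mu>) (\<lambda>t. (\<Sum>q. m p q \<beta> * t ^ q) *
            fps_nth (\<Prod>j\<in>{..n}. (delta_ser \<gamma> j c t) ^ \<beta> j) (k - 1 - p))"
          if p: "p \<in> {..k - 1}" and b: "\<beta> \<in> PiE {..n} (\<lambda>_. {..k - 1})" for p \<beta>
        proof -
          have "\<beta> \<in> multi_idx n" using b unfolding multi_idx_def by (auto simp: PiE_iff)
          then obtain \<rho> where "\<rho> > 0" "(\<lambda>t. \<Sum>q. m p q \<beta> * t ^ q) holomorphic_on ball 0 \<rho>"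
            using mseries_holo[OF M_holo] by blast
          then have c0: "Cl' 0 (\<lambda>t. \<Sum>q. m p q \<beta> * t ^ q)" unfolding Cl'_def using Cl_holo by blast
          have c1: "Cl' ((k - 1 - p) * \<mu>) (\<lambda>t. fps_nth (\<Prod>j\<in>{..n}. (delta_ser \<gamma> j c t) ^ \<beta> j) (k - 1 - p))"
            using prodg[of \<beta>] unfolding grd_def by auto
          have "Cl' (0 + (k - 1 - p) * \<mu>) (\<lambda>t. (\<Sum>q. m p q \<beta> * t ^ q) *
            fps_nth (\<Prod>j\<in>{..n}. (delta_ser \<gamma> j c t) ^ \<beta> j) (k - 1 - p))"
            by (rule Cl'_mult[OF c0 c1])
          then obtain v where "Cl ((k - 1 - p) * \<mu>) (\<lambda>t. (\<Sum>q. m p q \<beta> * t ^ q) *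
            fps_nth (\<Prod>j\<in>{..n}. (delta_ser \<gamma> j c t) ^ \<beta> j) (k - 1 - p)) v"
            unfolding Cl'_def by auto
          then show ?thesis by (rule Cl_mono) auto
        qed
        then have "Cl' ((k - 1) * \<mu>) (\<lambda>t. \<Sum>p\<in>{..k - 1}. \<Sum>\<beta>\<in>PiE {..n} (\<lambda>_. {..k - 1}).
            (\<Sum>q. m p q \<beta> * t ^ q) * fps_nth (\<Prod>j\<in>{..n}. (delta_ser \<gamma> j c t) ^ \<beta> j) (k - 1 - p))"
          by (intro Cl'_sum ballI) (auto intro: finite_PiE)
        then show ?thesis unfolding subst_coeff_def[abs_def] by simp
      qed
      have inv: "Cl \<mu> (\<lambda>t. inverse (t ^ \<mu>)) 1"
        unfolding Cl_def by (rule exI[of _ 1], auto intro!: exI[of _ "\<lambda>_. 1"] simp: divide_inverse)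
      have "Cl' (\<mu> + (k - 1) * \<mu>) (\<lambda>t. inverse (t ^ \<mu>) * subst_coeff n \<gamma> m c (k - 1) t)"
        using Cl'_mult[OF _ sub] inv unfolding Cl'_def by blast
      moreover have "\<mu> + (k - 1) * \<mu> = k * \<mu>" using k1 by (cases k) auto
      ultimately obtain w where rhs: "Cl (k * \<mu>) (\<lambda>t. inverse (t ^ \<mu>) * subst_coeff n \<gamma> m c (k - 1) t) w"
        unfolding Cl'_def by auto
      show "P k" unfolding P_def
      proof (intro allI impI)
        fix \<nu> :: int and h :: "complex \<Rightarrow> complex"
        assume H: "(\<exists>\<rho>>0. h holomorphic_on ball 0 \<rho>) \<and> h 0 \<noteq> 0 \<and>
            (\<forall>\<^sub>F t in at 0. c k t = t powi (- \<nu>) * h t)"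
        show "\<nu> \<le> int k * int \<mu>"
        proof (rule ccontr)
          assume "\<not> \<nu> \<le> int k * int \<mu>"
          then have gt: "\<nu> > int k * int \<mu>" by simp
          define e where "e = nat \<nu>"
          have \<nu>e: "\<nu> = int e" using gt e_def by (smt (verit) of_nat_0_le_iff of_nat_mult int_nat_eq)
          have ke: "k * \<mu> < e" using gt \<nu>e by (metis of_nat_less_iff of_nat_mult)
          obtain \<rho>1 where \<rho>1: "\<rho>1 > 0" "h holomorphic_on ball 0 \<rho>1" using H by blast
          obtain d where d: "d > 0" "\<forall>x. x \<noteq> 0 \<and> dist x 0 < d \<longrightarrow> c k x = x powi (- \<nu>) * h x"
            using H by (auto simp: eventually_at)
          have ck: "Cl e (c k) (h 0)" unfolding Cl_def
          proof (intro exI[of _ "min \<rho>1 d"] conjI exI[of _ h] ballI)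
            show "h holomorphic_on ball 0 (min \<rho>1 d)" by (rule holomorphic_on_subset[OF \<rho>1(2)]) auto
            fix t :: complex assume t: "t \<in> ball 0 (min \<rho>1 d) - {0}"
            then have "c k t = t powi (- \<nu>) * h t" using d(2) by (auto simp: dist_commute)
            then show "c k t = h t / t ^ e" unfolding \<nu>e by (simp add: power_int_minus divide_inverse mult.commute)
          qed (use \<rho>1 d in auto)
          define X where "X = (of_nat (k + N) - \<i> * of_real \<gamma> * of_nat e :: complex)"
          have "\<forall>j\<in>{..n}. Cl (0 + e) (\<lambda>t. a j t * ((dop \<gamma> (of_nat (k + N))) ^^ j) (c k) t) (a j 0 * (X ^ j * h 0))"
          proof
            fix j assume j: "j \<in> {..n}"
            have "Cl 0 (a j) (a j 0)" using a_holo j r_pos by (intro Cl_holo[of _ r]) auto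
            moreover have "Cl e (((dop \<gamma> (of_nat (k + N))) ^^ j) (c k)) (X ^ j * h 0)"
              unfolding X_def by (rule Cl_funpow[OF ck])
            ultimately show "Cl (0 + e) (\<lambda>t. a j t * ((dop \<gamma> (of_nat (k + N))) ^^ j) (c k) t) (a j 0 * (X ^ j * h 0))"
              by (rule Cl_mult)
          qed
          then have lhs: "Cl e (\<lambda>t. \<Sum>j\<le>n. a j t * ((dop \<gamma> (of_nat (k + N))) ^^ j) (c k) t) (\<Sum>j\<le>n. a j 0 * (X ^ j * h 0))"
            using Cl_sum[of "{..n}" e] by simp
          have "(\<Sum>j\<le>n. a j 0 * (X ^ j * h 0)) = 0"
            by (rule Cl_limit[OF lhs rhs _ ke]) (use solution k1 in auto)
          moreover have "(\<Sum>j\<le>n. a j 0 * (X ^ j * h 0)) = (\<Sum>j\<le>n. a j 0 * X ^ j) * h 0"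
            by (simp add: sum_distrib_right mult.assoc)
          moreover have Xeq: "of_nat (k + N) + \<i> * of_real \<gamma> * of_int (- \<nu>) = X"
            unfolding X_def \<nu>e by simp
          moreover have "(\<Sum>j\<le>n. a j 0 * X ^ j) \<noteq> 0"
            using no_int_roots[rule_format, OF k1, of "- \<nu>"] unfolding Xeq .
          ultimately show False using H by auto
        qed
      qed
    qed
  qed
  then show ?thesis unfolding P_def by blast
qed

end
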